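(* Let $\otimes$ be a uninorm on $[0,1]$ and $\neg$ a strong negation function. Then $(\otimes,\Phi^{\neg}(\otimes))$ satisfies the rearrangement inequality if and only if $(\otimes,\Phi^{\neg}(\otimes))$ satisfies the dual rearrangement inequality.
   Context: A uninorm is a function $\otimes:[0,1]^2\to[0,1]$ that is commutative, associative, monotonic (for all $x,y,z\in[0,1]$, $x\leq y$ implies $x\otimes z\leq y\otimes z$), and has an identity element $e\in[0,1]$ ($x\otimes e=x$ for all $x$). A negation is a monotonically nonincreasing function $\neg:[0,1]\to[0,1]$ with $\neg(0)=1$, $\neg(1)=0$; it is strong if it is strictly monotone and involutive. For $f:[0,1]^2\to[0,1]$, $\Phi^{\neg}(f)(x,y)=\neg(f(\neg x,\neg y))$. For uninorms $\otimes,\oplus$, the pair $(\otimes,\oplus)$ satisfies the rearrangement inequality if for every $n\geq1$, all $0\leq x_1\leq\cdots\leq x_n\leq 1$, $0\leq y_1\leq\cdots\leq y_n\leq 1$ and every permutation $\sigma$ of $\{1,\dots,n\}$, $$(x_n\otimes y_1)\oplus\cdots\oplus(x_1\otimes y_n)\leq (x_{\sigma(1)}\otimes y_1)\oplus\cdots\oplus(x_{\sigma(n)}\otimes y_n)\leq (x_1\otimes y_1)\oplus\cdots\oplus(x_n\otimes y_n),$$ and satisfies the dual rearrangement inequality if for all such data $$(x_n\oplus y_1)\otimes\cdots\otimes(x_1\oplus y_n)\geq (x_{\sigma(1)}\oplus y_1)\otimes\cdots\otimes(x_{\sigma(n)}\oplus y_n)\geq (x_1\oplus y_1)\otimes\cdots\otimes(x_n\oplus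 y_n).$$ *)

theory Defs
  imports Complex_Main "HOL-Combinatorics.Permutations"
begin

text \<open>Binary operations on the unit interval are modelled as functions real => real => real;
  only their values on [0,1] matter.\<close>

definition uninorm :: "(real \<Rightarrow> real \<Rightarrow> real) \<Rightarrow> bool" where
  "uninorm f \<longleftrightarrow>
     (\<forall>x\<in>{0..1}. \<forall>y\<in>{0..1}. f x y \<in> {0..1}) \<and>
     (\<forall>x\<in>{0..1}. \<forall>y\<in>{0..1}. f x y = f y x) \<and>
     (\<forall>x\<in>{0..1}. \<forall>y\<in>{0..1}. \<forall>z\<in>{0..1}. f (f x y) z = f x (f y z)) \<and>
     (\<forall>x\<in>{0..1}. \<forall>y\<in>{0..1}. \<forall>z\<in>{0..1}. x \<le> y \<longrightarrow> f x z \<le> f y z) \<and>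
     (\<exists>e\<in>{0..1}. \<forall>x\<in>{0..1}. f x e = x)"

definition negation :: "(real \<Rightarrow> real) \<Rightarrow> bool" where
  "negation N \<longleftrightarrow>
     (\<forall>x\<in>{0..1}. N x \<in> {0..1}) \<and>
     (\<forall>x\<in>{0..1}. \<forall>y\<in>{0..1}. x \<le> y \<longrightarrow> N y \<le> N x) \<and>
     N 0 = 1 \<and> N 1 = 0"

definition strong_negation :: "(real \<Rightarrow> real) \<Rightarrow> bool" where
  "strong_negation N \<longleftrightarrow> negation N \<and>
     (\<forall>x\<in>{0..1}. \<forall>y\<in>{0..1}. x < y \<longrightarrow> N y < N x) \<and>
     (\<forall>x\<in>{0..1}. N (N x) = x)"

definition Phi :: "(real \<Rightarrow> real) \<Rightarrow> (real \<Rightarrow> real \<Rightarrow> real) \<Rightarrow> real \<Rightarrow> real \<Rightarrow> real" where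
  "Phi N f x y = N (f (N x) (N y))"

definition bigop :: "(real \<Rightarrow> real \<Rightarrow> real) \<Rightarrow> (nat \<Rightarrow> real) \<Rightarrow> nat \<Rightarrow> real" where
  "bigop op t n = foldl op (t 1) (map t [2..<Suc n])"

definition sorted_unit :: "(nat \<Rightarrow> real) \<Rightarrow> nat \<Rightarrow> bool" where
  "sorted_unit x n \<longleftrightarrow> (\<forall>i\<in>{1..n}. 0 \<le> x i \<and> x i \<le> 1) \<and>
     (\<forall>i j. 1 \<le> i \<longrightarrow> i \<le> j \<longrightarrow> j \<le> n \<longrightarrow> x i \<le> x j)"

definition rearrangement_ineq :: "(real \<Rightarrow> real \<Rightarrow> real) \<Rightarrow> (real \<Rightarrow> real \<Rightarrow> real) \<Rightarrow> bool" where
  "rearrangement_ineq otimes oplus \<longleftrightarrow>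
     (\<forall>n\<ge>1. \<forall>x y \<sigma>. sorted_unit x n \<longrightarrow> sorted_unit y n \<longrightarrow> \<sigma> permutes {1..n} \<longrightarrow>
        bigop oplus (\<lambda>i. otimes (x (n + 1 - i)) (y i)) n
          \<le> bigop oplus (\<lambda>i. otimes (x (\<sigma> i)) (y i)) n \<and>
        bigop oplus (\<lambda>i. otimes (x (\<sigma> i)) (y i)) n
          \<le> bigop oplus (\<lambda>i. otimes (x i) (y i)) n)"

definition dual_rearrangement_ineq :: "(real \<Rightarrow> real \<Rightarrow> real) \<Rightarrow> (real \<Rightarrow> real \<Rightarrow> real) \<Rightarrow> bool" where
  "dual_rearrangement_ineq otimes oplus \<longleftrightarrow>
     (\<forall>n\<ge>1. \<forall>x y \<sigma>. sorted_unit x n \<longrightarrow> sorted_unit y n \<longrightarrow> \<sigma> permutes {1..n} \<longrightarrow>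
        bigop otimes (\<lambda>i. oplus (x (n + 1 - i)) (y i)) n
          \<ge> bigop otimes (\<lambda>i. oplus (x (\<sigma> i)) (y i)) n \<and>
        bigop otimes (\<lambda>i. oplus (x (\<sigma> i)) (y i)) n
          \<ge> bigop otimes (\<lambda>i. oplus (x i) (y i)) n)"

end

theory Submission
  imports Defs
begin

definition cac :: "(real \<Rightarrow> real \<Rightarrow> real) \<Rightarrow> bool" where
  "cac f \<longleftrightarrow>
     (\<forall>x\<in>{0..1}. \<forall>y\<in>{0..1}. f x y \<in> {0..1}) \<and>
     (\<forall>x\<in>{0..1}. \<forall>y\<in>{0..1}. f x y = f y x) \<and>
     (\<forall>x\<in>{0..1}. \<forall>y\<in>{0..1}. \<forall>z\<in>{0..1}. f (f x y) z = f x (f y z))"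

lemma foldl_closed:
  assumes "cac f" "a \<in> {0..1}" "set xs \<subseteq> {0..1}"
  shows "foldl f a xs \<in> {0..1}"
  using assms(2,3)
proof (induction xs arbitrary: a)
  case Nil then show ?case by simp
next
  case (Cons z xs)
  have "f a z \<in> {0..1}" using Cons.prems assms(1) unfolding cac_def by auto
  then show ?case using Cons by simp
qed

lemma foldl_N:
  assumes "\<forall>a\<in>{0..1}. \<forall>b\<in>{0..1}. N (f a b) = g (N a) (N b)"
    and "cac f" "a \<in> {0..1}" "set xs \<subseteq> {0..1}"
  shows "N (foldl f a xs) = foldl g (N a) (map N xs)"
  using assms(3,4)
proof (induction xs arbitrary: a)
  case Nil then show ?case by simp
next
  case (Cons z xs)
  have "f a z \<in> {0..1}" using Cons.prems assms(2) unfolding cac_def by auto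
  then show ?case using Cons assms(1) by simp
qed

lemma foldl_pull:
  assumes "cac f" "a \<in> {0..1}" "b \<in> {0..1}" "set xs \<subseteq> {0..1}"
  shows "foldl f (f a b) xs = f a (foldl f b xs)"
  using assms(3,4)
proof (induction xs arbitrary: b)
  case Nil then show ?case by simp
next
  case (Cons z xs)
  have "f b z \<in> {0..1}" using Cons.prems assms(1) unfolding cac_def by auto
  moreover have "f (f a b) z = f a (f b z)" using Cons.prems assms unfolding cac_def by auto
  ultimately show ?case using Cons by simp
qed

definition FF :: "(real \<Rightarrow> real \<Rightarrow> real) \<Rightarrow> real list \<Rightarrow> real" where
  "FF f L = foldl f (hd L) (tl L)"

lemma FF_snoc: "L \<noteq> [] \<Longrightarrow> FF f (L @ [z]) = f (FF f L) z"
  unfolding FF_def by (cases L) auto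

lemma FF_rev:
  assumes "cac f" "set L \<subseteq> {0..1}" "L \<noteq> []"
  shows "FF f (rev L) = FF f L"
  using assms(2,3)
proof (induction L)
  case Nil then show ?case by simp
next
  case (Cons z xs)
  show ?case
  proof (cases "xs = []")
    case True then show ?thesis by simp
  next
    case False
    then obtain y ys where xs: "xs = y # ys" by (cases xs) auto
    have cl: "FF f xs \<in> {0..1}" unfolding FF_def using Cons.prems xs foldl_closed[OF assms(1)] by auto
    have "FF f (rev (z # xs)) = f (FF f (rev xs)) z"
      using False by (simp add: FF_snoc)
    also have "\<dots> = f (FF f xs) z" using Cons False by simp
    also have "\<dots> = f z (FF f xs)" using cl Cons.prems assms(1) unfolding cac_def by auto
    also have "\<dots> = FF f (z # xs)" unfolding FF_def using xs Cons.prems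
      foldl_pull[OF assms(1), of z y ys] by auto
    finally show ?thesis .
  qed
qed

lemma bigop_FF: "n \<ge> 1 \<Longrightarrow> bigop f t n = FF f (map t [1..<Suc n])"
  unfolding bigop_def FF_def by (simp add: upt_conv_Cons numeral_2_eq_2 del: upt_Suc)

lemma map_rev_upt: "map (\<lambda>i. s (n + 1 - i)) [1..<Suc n] = rev (map s [1..<Suc n])"
  by (rule nth_equalityI) (auto simp: rev_nth Suc_diff_Suc simp del: upt_Suc)


lemma core:
  assumes cA: "cac A" and cA': "cac A'" and cB: "cac B"
    and NA: "\<forall>a\<in>{0..1}. \<forall>b\<in>{0..1}. N (A a b) = A' (N a) (N b)"
    and NB: "\<forall>a\<in>{0..1}. \<forall>b\<in>{0..1}. N (B a b) = B' (N a) (N b)"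
    and Nc: "\<forall>a\<in>{0..1}. N a \<in> {0..1}" and NN: "\<forall>a\<in>{0..1}. N (N a) = a"
    and n: "n \<ge> 1" and xr: "\<forall>i\<in>{1..n}. x i \<in> {0..1}" and yr: "\<forall>i\<in>{1..n}. y i \<in> {0..1}"
    and pr: "\<forall>i\<in>{1..n}. \<pi> i \<in> {1..n}"
  shows "N (bigop A (\<lambda>j. B (N (x (n + 1 - \<pi> j))) (N (y (n + 1 - j)))) n)
       = bigop A' (\<lambda>i. B' (x (n + 1 - \<pi> (n + 1 - i))) (y i)) n"
proof -
  define t where "t j = B (N (x (n + 1 - \<pi> j))) (N (y (n + 1 - j)))" for j
  define s where "s j = B' (x (n + 1 - \<pi> j)) (y (n + 1 - j))" for j
  define L where "L = map t [1..<Suc n]"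
  have trng: "t j \<in> {0..1}" and Nt: "N (t j) = s j" if "j \<in> {1..n}" for j
  proof -
    have "\<pi> j \<in> {1..n}" using pr that by auto
    then have "n + 1 - \<pi> j \<in> {1..n}" by auto
    then have a: "x (n + 1 - \<pi> j) \<in> {0..1}" using xr by blast
    have "n + 1 - j \<in> {1..n}" using that by auto
    then have b: "y (n + 1 - j) \<in> {0..1}" using yr by blast
    have a': "N (x (n + 1 - \<pi> j)) \<in> {0..1}" using a Nc by auto
    have b': "N (y (n + 1 - j)) \<in> {0..1}" using b Nc by auto
    show "t j \<in> {0..1}" unfolding t_def using a' b' cB unfolding cac_def by auto
    show "N (t j) = s j" unfolding t_def s_def using NB a' b' NN a b by auto
  qed
  have Lne: "L \<noteq> []" unfolding L_def using n by simp
  have Lset: "set L \<subseteq> {0..1}" unfolding L_def using trng by auto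
  obtain h T where hT: "L = h # T" using Lne by (cases L) auto
  have "N (bigop A t n) = N (FF A L)" using bigop_FF[OF n] L_def by simp
  also have "\<dots> = FF A' (map N L)" unfolding FF_def hT
    using foldl_N[OF NA cA, of h T] Lset hT by simp
  also have "map N L = map s [1..<Suc n]" unfolding L_def
    unfolding map_map by (rule map_cong) (auto simp: Nt simp del: upt_Suc)
  also have "FF A' (map s [1..<Suc n]) = FF A' (rev (map s [1..<Suc n]))"
  proof -
    have "s j \<in> {0..1}" if "j \<in> {1..n}" for j using Nt[OF that] trng[OF that] Nc by metis
    then have "set (map s [1..<Suc n]) \<subseteq> {0..1}" by (auto simp del: upt_Suc)
    moreover have "map s [1..<Suc n] \<noteq> []" using n by simp
    ultimately show ?thesis using FF_rev[OF cA'] by metis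
  qed
  also have "rev (map s [1..<Suc n]) = map (\<lambda>i. s (n + 1 - i)) [1..<Suc n]"
    by (rule map_rev_upt[symmetric])
  also have "\<dots> = map (\<lambda>i. B' (x (n + 1 - \<pi> (n + 1 - i))) (y i)) [1..<Suc n]"
    by (rule map_cong) (auto simp: s_def simp del: upt_Suc)
  also have "FF A' \<dots> = bigop A' (\<lambda>i. B' (x (n + 1 - \<pi> (n + 1 - i))) (y i)) n"
    using bigop_FF[OF n] by simp
  finally show ?thesis unfolding t_def by simp
qed

lemma bigop_cong: "n \<ge> 1 \<Longrightarrow> (\<And>i. i \<in> {1..n} \<Longrightarrow> f i = g i) \<Longrightarrow> bigop op f n = bigop op g n"
proof -
  assume n: "n \<ge> 1" and fg: "\<And>i. i \<in> {1..n} \<Longrightarrow> f i = g i"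
  have m: "map f [2..<Suc n] = map g [2..<Suc n]" by (rule map_cong) (auto intro: fg simp del: upt_Suc)
  have e: "f 1 = g 1" using n fg by auto
  show ?thesis unfolding bigop_def by (simp only: m e)
qed

lemma bigop_closed:
  assumes "cac op" "n \<ge> 1" "\<And>i. i \<in> {1..n} \<Longrightarrow> t i \<in> {0..1}"
  shows "bigop op t n \<in> {0..1}"
  unfolding bigop_def using assms by (intro foldl_closed) (auto simp del: upt_Suc)

definition rv :: "nat \<Rightarrow> nat \<Rightarrow> nat" where
  "rv n i = (if i \<in> {1..n} then n + 1 - i else i)"

lemma rv_permutes: "rv n permutes {1..n}"
proof (rule bij_imp_permutes)
  show "bij_betw (rv n) {1..n} {1..n}"
    by (rule bij_betw_byWitness[where f'="rv n"]) (auto simp: rv_def)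
  show "\<And>x. x \<notin> {1..n} \<Longrightarrow> rv n x = x" unfolding rv_def by auto
qed

lemma tau_permutes:
  assumes "\<sigma> permutes {1..n}"
  shows "(\<lambda>i. rv n (\<sigma> (rv n i))) permutes {1..n}"
proof -
  have "rv n \<circ> (\<sigma> \<circ> rv n) permutes {1..n}"
    by (intro permutes_compose rv_permutes assms)
  then show ?thesis by (simp add: comp_def)
qed

lemma sorted_rev:
  assumes "sorted_unit x n" and Nc: "\<forall>a\<in>{0..1}. N a \<in> {0..1}"
    and Nmono: "\<forall>a\<in>{0..1}. \<forall>b\<in>{0..1}. a \<le> b \<longrightarrow> N b \<le> N a"
  shows "sorted_unit (\<lambda>i. N (x (n + 1 - i))) n"
  unfolding sorted_unit_def
proof (intro conjI allI impI ballI)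
  fix i assume i: "i \<in> {1..n}"
  then have "n + 1 - i \<in> {1..n}" by auto
  then have "x (n + 1 - i) \<in> {0..1}" using assms(1) unfolding sorted_unit_def by auto
  then have "N (x (n + 1 - i)) \<in> {0..1}" using Nc by auto
  then show "0 \<le> N (x (n + 1 - i))" "N (x (n + 1 - i)) \<le> 1" by auto
next
  fix i j :: nat assume ij: "1 \<le> i" "i \<le> j" "j \<le> n"
  have r: "n + 1 - j \<in> {1..n}" "n + 1 - i \<in> {1..n}" using ij by auto
  then have a: "x (n + 1 - j) \<in> {0..1}" "x (n + 1 - i) \<in> {0..1}"
    using assms(1) unfolding sorted_unit_def by auto
  have "x (n + 1 - j) \<le> x (n + 1 - i)" using assms(1) ij unfolding sorted_unit_def by auto
  then show "N (x (n + 1 - i)) \<le> N (x (n + 1 - j))" using Nmono a by auto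
qed

lemma three:
  assumes cA: "cac A" and cA': "cac A'" and cB: "cac B"
    and NA: "\<forall>a\<in>{0..1}. \<forall>b\<in>{0..1}. N (A a b) = A' (N a) (N b)"
    and NB: "\<forall>a\<in>{0..1}. \<forall>b\<in>{0..1}. N (B a b) = B' (N a) (N b)"
    and Nc: "\<forall>a\<in>{0..1}. N a \<in> {0..1}" and NN: "\<forall>a\<in>{0..1}. N (N a) = a"
    and n: "n \<ge> 1" and sx: "sorted_unit x n" and sy: "sorted_unit y n"
    and sp: "\<sigma> permutes {1..n}"
    and xd: "x' = (\<lambda>i. N (x (n + 1 - i)))" and yd: "y' = (\<lambda>i. N (y (n + 1 - i)))"
  shows "N (bigop A (\<lambda>i. B (x' (n + 1 - i)) (y' i)) n) = bigop A' (\<lambda>i. B' (x (n + 1 - i)) (y i)) n"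
    "N (bigop A (\<lambda>i. B (x' (rv n (\<sigma> (rv n i)))) (y' i)) n) = bigop A' (\<lambda>i. B' (x (\<sigma> i)) (y i)) n"
    "N (bigop A (\<lambda>i. B (x' i) (y' i)) n) = bigop A' (\<lambda>i. B' (x i) (y i)) n"
proof -
  have xr: "\<forall>i\<in>{1..n}. x i \<in> {0..1}" and yr: "\<forall>i\<in>{1..n}. y i \<in> {0..1}"
    using sx sy unfolding sorted_unit_def by auto
  note C = core[OF cA cA' cB NA NB Nc NN n xr yr]
  have "N (bigop A (\<lambda>i. B (x' (n + 1 - i)) (y' i)) n)
     = bigop A' (\<lambda>i. B' (x (n + 1 - (n + 1 - (n + 1 - i)))) (y i)) n"
    unfolding xd yd by (rule C[where \<pi>="\<lambda>j. n + 1 - j"]) auto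
  also have "\<dots> = bigop A' (\<lambda>i. B' (x (n + 1 - i)) (y i)) n"
    by (rule bigop_cong[OF n]) auto
  finally show "N (bigop A (\<lambda>i. B (x' (n + 1 - i)) (y' i)) n) = bigop A' (\<lambda>i. B' (x (n + 1 - i)) (y i)) n" .
  have pin: "\<forall>i\<in>{1..n}. rv n (\<sigma> (rv n i)) \<in> {1..n}"
    using permutes_in_image[OF tau_permutes[OF sp]] by auto
  have "N (bigop A (\<lambda>i. B (x' (rv n (\<sigma> (rv n i)))) (y' i)) n)
     = bigop A' (\<lambda>i. B' (x (n + 1 - rv n (\<sigma> (rv n (n + 1 - i))))) (y i)) n"
    unfolding xd yd by (rule C[where \<pi>="\<lambda>i. rv n (\<sigma> (rv n i))"]) (rule pin)
  also have "\<dots> = bigop A' (\<lambda>i. B' (x (\<sigma> i)) (y i)) n"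
  proof (rule bigop_cong[OF n])
    fix i assume i: "i \<in> {1..n}"
    then have "rv n (n + 1 - i) = i" by (auto simp: rv_def)
    moreover have "\<sigma> i \<in> {1..n}" using permutes_in_image[OF sp] i by auto
    ultimately have "n + 1 - rv n (\<sigma> (rv n (n + 1 - i))) = \<sigma> i" by (auto simp: rv_def)
    then show "B' (x (n + 1 - rv n (\<sigma> (rv n (n + 1 - i))))) (y i) = B' (x (\<sigma> i)) (y i)" by simp
  qed
  finally show "N (bigop A (\<lambda>i. B (x' (rv n (\<sigma> (rv n i)))) (y' i)) n) = bigop A' (\<lambda>i. B' (x (\<sigma> i)) (y i)) n" .
  have "N (bigop A (\<lambda>i. B (x' i) (y' i)) n)
     = bigop A' (\<lambda>i. B' (x (n + 1 - (n + 1 - i))) (y i)) n"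
    unfolding xd yd by (rule C[where \<pi>="\<lambda>j. j"]) auto
  also have "\<dots> = bigop A' (\<lambda>i. B' (x i) (y i)) n"
    by (rule bigop_cong[OF n]) auto
  finally show "N (bigop A (\<lambda>i. B (x' i) (y' i)) n) = bigop A' (\<lambda>i. B' (x i) (y i)) n" .
qed

lemma bigop_cl:
  assumes cA: "cac A" and cB: "cac B" and n: "n \<ge> 1"
    and sx: "sorted_unit x' n" and sy: "sorted_unit y' n"
    and p: "\<forall>i\<in>{1..n}. p i \<in> {1..n}"
  shows "bigop A (\<lambda>i. B (x' (p i)) (y' i)) n \<in> {0..1}"
proof (rule bigop_closed[OF cA n])
  fix i assume i: "i \<in> {1..n}"
  have pi: "p i \<in> {1..n}" using p i by blast
  have bx: "\<forall>i\<in>{1..n}. 0 \<le> x' i \<and> x' i \<le> 1" using sx unfolding sorted_unit_def by blast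
  have by': "\<forall>i\<in>{1..n}. 0 \<le> y' i \<and> y' i \<le> 1" using sy unfolding sorted_unit_def by blast
  have "x' (p i) \<in> {0..1}" using bx pi by simp
  moreover have "y' i \<in> {0..1}" using by' i by simp
  ultimately show "B (x' (p i)) (y' i) \<in> {0..1}" using cB unfolding cac_def by auto
qed

lemma three_perm:
  assumes "\<sigma> permutes {1..n}"
  shows "\<forall>i\<in>{1..n}. n + 1 - i \<in> {1..n}" "\<forall>i\<in>{1..n}. rv n (\<sigma> (rv n i)) \<in> {1..n}"
    "\<forall>i\<in>{1..n}. i \<in> {1..n}"
proof -
  show "\<forall>i\<in>{1..n}. n + 1 - i \<in> {1..n}" by auto
  show "\<forall>i\<in>{1..n}. i \<in> {1..n}" by blast
  have "(\<lambda>i. rv n (\<sigma> (rv n i))) i \<in> {1..n} \<longleftrightarrow> i \<in> {1..n}" for i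
    by (rule permutes_in_image[OF tau_permutes[OF assms]])
  then show "\<forall>i\<in>{1..n}. rv n (\<sigma> (rv n i)) \<in> {1..n}" by simp
qed

theorem corollary1:
  fixes U :: "real \<Rightarrow> real \<Rightarrow> real" and N :: "real \<Rightarrow> real"
  assumes "uninorm U" and "strong_negation N"
  shows "rearrangement_ineq U (Phi N U) \<longleftrightarrow> dual_rearrangement_ineq U (Phi N U)"
proof -
  define V where "V = Phi N U"
  have cU: "cac U" using assms(1) unfolding uninorm_def cac_def by blast
  have Nc: "\<forall>a\<in>{0..1}. N a \<in> {0..1}" and NN: "\<forall>a\<in>{0..1}. N (N a) = a"
    and Nmono: "\<forall>a\<in>{0..1}. \<forall>b\<in>{0..1}. a \<le> b \<longrightarrow> N b \<le> N a"
    using assms(2) unfolding strong_negation_def negation_def by auto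
  have Ucl: "\<forall>a\<in>{0..1}. \<forall>b\<in>{0..1}. U a b \<in> {0..1}" using cU unfolding cac_def by auto
  have NU: "\<forall>a\<in>{0..1}. \<forall>b\<in>{0..1}. N (U a b) = V (N a) (N b)"
    unfolding V_def Phi_def using NN by auto
  have NV: "\<forall>a\<in>{0..1}. \<forall>b\<in>{0..1}. N (V a b) = U (N a) (N b)"
    unfolding V_def Phi_def using NN Nc Ucl by auto
  have cV: "cac V"
    unfolding cac_def
  proof (intro conjI ballI)
    fix a b c :: real assume a: "a \<in> {0..1}" and b: "b \<in> {0..1}" and c: "c \<in> {0..1}"
    have a': "N a \<in> {0..1}" and b': "N b \<in> {0..1}" and c': "N c \<in> {0..1}" using a b c Nc by auto
    have ab: "U (N a) (N b) \<in> {0..1}" and bc: "U (N b) (N c) \<in> {0..1}" using a' b' c' Ucl by auto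
    have as: "U (U (N a) (N b)) (N c) = U (N a) (U (N b) (N c))"
      using cU a' b' c' unfolding cac_def by blast
    have "V (V a b) c = N (U (U (N a) (N b)) (N c))" unfolding V_def Phi_def using NN ab by simp
    also have "\<dots> = N (U (N a) (U (N b) (N c)))" by (simp only: as)
    also have "\<dots> = V a (V b c)" unfolding V_def Phi_def using NN bc by simp
    finally show "V (V a b) c = V a (V b c)" .
  next
    fix a b :: real assume a: "a \<in> {0..1}" and b: "b \<in> {0..1}"
    have a': "N a \<in> {0..1}" and b': "N b \<in> {0..1}" using a b Nc by auto
    show "V a b \<in> {0..1}" unfolding V_def Phi_def using a' b' Ucl Nc by auto
    show "V a b = V b a" unfolding V_def Phi_def using a' b' cU unfolding cac_def by auto
  qed
  have "rearrangement_ineq U V \<longleftrightarrow> dual_rearrangement_ineq U V"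
  proof
    assume RI: "rearrangement_ineq U V"
    have RI': "\<And>n x y \<sigma>. n \<ge> 1 \<Longrightarrow> sorted_unit x n \<Longrightarrow> sorted_unit y n \<Longrightarrow> \<sigma> permutes {1..n} \<Longrightarrow>
        bigop V (\<lambda>i. U (x (n + 1 - i)) (y i)) n \<le> bigop V (\<lambda>i. U (x (\<sigma> i)) (y i)) n \<and>
        bigop V (\<lambda>i. U (x (\<sigma> i)) (y i)) n \<le> bigop V (\<lambda>i. U (x i) (y i)) n"
      using RI unfolding rearrangement_ineq_def by blast
    show "dual_rearrangement_ineq U V"
      unfolding dual_rearrangement_ineq_def
    proof (intro allI impI)
      fix n :: nat and x y :: "nat \<Rightarrow> real" and \<sigma>
      assume n: "n \<ge> 1" and sx: "sorted_unit x n" and sy: "sorted_unit y n" and sp: "\<sigma> permutes {1..n}"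
      define x' where "x' = (\<lambda>i. N (x (n + 1 - i)))"
      define y' where "y' = (\<lambda>i. N (y (n + 1 - i)))"
      have sx': "sorted_unit x' n" unfolding x'_def by (rule sorted_rev[OF sx Nc Nmono])
      have sy': "sorted_unit y' n" unfolding y'_def by (rule sorted_rev[OF sy Nc Nmono])
      have h: "bigop V (\<lambda>i. U (x' (n + 1 - i)) (y' i)) n \<le> bigop V (\<lambda>i. U (x' (rv n (\<sigma> (rv n i)))) (y' i)) n \<and>
            bigop V (\<lambda>i. U (x' (rv n (\<sigma> (rv n i)))) (y' i)) n \<le> bigop V (\<lambda>i. U (x' i) (y' i)) n"
        by (rule RI'[OF n sx' sy' tau_permutes[OF sp]])
      note e = three[OF cV cU cU NV NU Nc NN n sx sy sp x'_def y'_def]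
      note P = three_perm[OF sp]
      note c1 = bigop_cl[OF cV cU n sx' sy' P(1)] and c2 = bigop_cl[OF cV cU n sx' sy' P(2)]
        and c3 = bigop_cl[OF cV cU n sx' sy' P(3)]
      show "bigop U (\<lambda>i. V (x (n + 1 - i)) (y i)) n \<ge> bigop U (\<lambda>i. V (x (\<sigma> i)) (y i)) n \<and>
            bigop U (\<lambda>i. V (x (\<sigma> i)) (y i)) n \<ge> bigop U (\<lambda>i. V (x i) (y i)) n"
        unfolding e(1)[symmetric] e(2)[symmetric] e(3)[symmetric]
        using Nmono[rule_format, OF c1 c2 conjunct1[OF h]] Nmono[rule_format, OF c2 c3 conjunct2[OF h]]
        by simp
    qed
  next
    assume DRI: "dual_rearrangement_ineq U V"
    have DRI': "\<And>n x y \<sigma>. n \<ge> 1 \<Longrightarrow> sorted_unit x n \<Longrightarrow> sorted_unit y n \<Longrightarrow> \<sigma> permutes {1..n} \<Longrightarrow>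
        bigop U (\<lambda>i. V (x (n + 1 - i)) (y i)) n \<ge> bigop U (\<lambda>i. V (x (\<sigma> i)) (y i)) n \<and>
        bigop U (\<lambda>i. V (x (\<sigma> i)) (y i)) n \<ge> bigop U (\<lambda>i. V (x i) (y i)) n"
      using DRI unfolding dual_rearrangement_ineq_def by blast
    show "rearrangement_ineq U V"
      unfolding rearrangement_ineq_def
    proof (intro allI impI)
      fix n :: nat and x y :: "nat \<Rightarrow> real" and \<sigma>
      assume n: "n \<ge> 1" and sx: "sorted_unit x n" and sy: "sorted_unit y n" and sp: "\<sigma> permutes {1..n}"
      define x' where "x' = (\<lambda>i. N (x (n + 1 - i)))"
      define y' where "y' = (\<lambda>i. N (y (n + 1 - i)))"
      have sx': "sorted_unit x' n" unfolding x'_def by (rule sorted_rev[OF sx Nc Nmono])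
      have sy': "sorted_unit y' n" unfolding y'_def by (rule sorted_rev[OF sy Nc Nmono])
      have h: "bigop U (\<lambda>i. V (x' (n + 1 - i)) (y' i)) n \<ge> bigop U (\<lambda>i. V (x' (rv n (\<sigma> (rv n i)))) (y' i)) n \<and>
            bigop U (\<lambda>i. V (x' (rv n (\<sigma> (rv n i)))) (y' i)) n \<ge> bigop U (\<lambda>i. V (x' i) (y' i)) n"
        by (rule DRI'[OF n sx' sy' tau_permutes[OF sp]])
      note e = three[OF cU cV cV NU NV Nc NN n sx sy sp x'_def y'_def]
      note P = three_perm[OF sp]
      note c1 = bigop_cl[OF cU cV n sx' sy' P(1)] and c2 = bigop_cl[OF cU cV n sx' sy' P(2)]
        and c3 = bigop_cl[OF cU cV n sx' sy' P(3)]
      show "bigop V (\<lambda>i. U (x (n + 1 - i)) (y i)) n \<le> bigop V (\<lambda>i. U (x (\<sigma> i)) (y i)) n \<and>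
            bigop V (\<lambda>i. U (x (\<sigma> i)) (y i)) n \<le> bigop V (\<lambda>i. U (x i) (y i)) n"
        unfolding e(1)[symmetric] e(2)[symmetric] e(3)[symmetric]
        using Nmono[rule_format, OF c2 c1 conjunct1[OF h]] Nmono[rule_format, OF c3 c2 conjunct2[OF h]]
        by simp
    qed
  qed
  then show ?thesis by (simp only: V_def)
qed

end
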